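(* Let $N\ge 1$, let $a_1,\dots,a_N\in\{0,1\}$ with $a=\sum_i a_i$, and let $h_{UB}\sim\mathcal{CN}(0,\gamma^2)$, $h_{UR,i}\sim\mathcal{CN}(0,\alpha^2)$, $h_{RB,i}\sim\mathcal{CN}(0,\beta^2)$ ($i=1,\dots,N$) be mutually independent, with $\alpha,\beta,\gamma>0$. For $\overline{\gamma}_s>0$ define $$\gamma_s=\overline{\gamma}_s\Big[\Big(|h_{UB}|+\sum_{i=1}^N(1-a_i)|h_{RB,i}||h_{UR,i}|\Big)^2+\sum_{i=1}^N a_i|h_{UR,i}|^2\Big].$$ Then $$\mathbb{E}[\gamma_s]=\overline{\gamma}_s\Big[N^2\tfrac{\pi^2}{16}\alpha^2\beta^2+\alpha^2\beta^2\Big(N\big(1-\tfrac{\pi^2}{8}a-\tfrac{\pi^2}{16}\big)+\tfrac{\pi^2}{16}a(a+1)-a\Big)+\alpha\beta\gamma\,\tfrac{\pi\sqrt{\pi}}{4}(N-a)+a\alpha^2+\gamma^2\Big],$$ $$\mathbb{E}[\gamma_s^2]=\overline{\gamma}_s^2\Big[2\gamma^4+6(N-a)\big(1+\tfrac{\pi^2}{16}(N-a-1)\big)\gamma^2\alpha^2\beta^2+\tfrac{3\pi\sqrt{\pi}}{4}(N-a)\gamma^3\alpha\beta+C_4\alpha^4\beta^4+2\sqrt{\pi}\,C_3\alpha^3\beta^3\gamma+2a\gamma^2\alpha^2+2(N-a)\big(1+\tfrac{\pi^2}{16}(N-a-1)\big)a\alpha^4\beta^2+\tfrac{\pi\sqrt{\pi}}{2}(N-a)a\alpha^3\gamma\beta+a(a+1)\alpha^4\Big],$$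 where $C_3=\tfrac{9\pi}{16}(N-a)+\tfrac{3\pi}{4}(N-a)(N-a-1)+\tfrac{\pi^3}{64}(N-a)(N-a-1)(N-a-2)$ and $C_4=4(N-a)+\tfrac{9\pi^2}{16}(N-a)(N-a-1)+3(N-a)(N-a-1)+\tfrac{6\pi^2}{16}(N-a)(N-a-1)(N-a-2)+\tfrac{\pi^4}{256}(N-a)(N-a-1)(N-a-2)(N-a-3)$. Consequently, the Gamma distribution $\Gamma(k,p)$ with the same first two moments as $\gamma_s$ (used as an approximation of the distribution of $\gamma_s$) has shape $k=\frac{\mathbb{E}[\gamma_s]^2}{\mathbb{E}[\gamma_s^2]-\mathbb{E}[\gamma_s]^2}$ and scale $p=\frac{\mathbb{E}[\gamma_s^2]-\mathbb{E}[\gamma_s]^2}{\mathbb{E}[\gamma_s]}$.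
   Context: $\gamma_s$ is the received SNR of an uplink single-antenna user / single-antenna base station system aided by an $N$-element RDARS surface, of which $a$ elements ($a_i=1$) operate as remote antennas connected to the base station and $N-a$ elements ($a_i=0$) operate as passive reflectors with optimal (coherently aligned) phase shifts, under maximum ratio combining and equal noise variances; $\overline{\gamma}_s$ is the transmit SNR. $\mathcal{CN}(0,\sigma^2)$ is the circularly symmetric complex Gaussian distribution. $\Gamma(k,p)$ denotes the Gamma distribution with shape $k$ and scale $p$. *)

theory Defs
  imports "HOL-Probability.Probability"
begin

datatype chan = UB | UR nat | RB nat

definition CN_density :: "real \<Rightarrow> complex \<Rightarrow> ennreal" where
  "CN_density s2 z = ennreal (exp (- (norm z * norm z) / s2) / (pi * s2))"

definition gamma_density :: "real \<Rightarrow> real \<Rightarrow> real \<Rightarrow> real" where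
  "gamma_density k p x =
     (if 0 < x then x powr (k - 1) * exp (- x / p) / (Gamma k * p powr k) else 0)"

definition rdars_snr ::
  "nat \<Rightarrow> (nat \<Rightarrow> real) \<Rightarrow> real \<Rightarrow> complex \<Rightarrow> (nat \<Rightarrow> complex) \<Rightarrow> (nat \<Rightarrow> complex) \<Rightarrow> real" where
  "rdars_snr N A gbar hUB hUR hRB =
     gbar * ((cmod hUB + (\<Sum>i=1..N. (1 - A i) * cmod (hRB i) * cmod (hUR i)))^2
             + (\<Sum>i=1..N. A i * (cmod (hUR i))^2))"

end

theory Submission
  imports Defs
begin

lemma Complex_pair_measurable:
  "(\<lambda>(x,y). Complex x y) \<in> borel_measurable (lborel \<Otimes>\<^sub>M (lborel::real measure))"
proof -
  have "(\<lambda>(x,y). Complex x y) = (\<lambda>p. complex_of_real (fst p) + \<i> * complex_of_real (snd p))"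
    by (auto simp: Complex_eq fun_eq_iff)
  then show ?thesis by simp
qed

lemma lborel_complex_eq:
  "(lborel :: complex measure) = distr (lborel \<Otimes>\<^sub>M lborel) borel (\<lambda>(x,y). Complex x y)"
proof (rule lborel_eqI)
  have meas: "(\<lambda>(x,y). Complex x y) \<in> borel_measurable (lborel \<Otimes>\<^sub>M (lborel::real measure))"
    by (rule Complex_pair_measurable)
  fix l u :: complex
  assume lu: "\<And>b. b \<in> Basis \<Longrightarrow> l \<bullet> b \<le> u \<bullet> b"
  have le: "Re l \<le> Re u" "Im l \<le> Im u" using lu[of 1] lu[of \<i>] by (auto simp: inner_complex_def)
  have pre: "(\<lambda>(x,y). Complex x y) -` box l u \<inter> space (lborel \<Otimes>\<^sub>M lborel) = {Re l<..<Re u} \<times> {Im l<..<Im u}"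
    by (auto simp: box_def Basis_complex_def inner_complex_def space_pair_measure)
  have "emeasure (distr (lborel \<Otimes>\<^sub>M lborel) borel (\<lambda>(x,y). Complex x y)) (box l u)
      = emeasure (lborel \<Otimes>\<^sub>M lborel) ({Re l<..<Re u} \<times> {Im l<..<Im u})"
    using meas by (subst emeasure_distr) (auto simp: pre)
  also have "\<dots> = ennreal ((Re u - Re l) * (Im u - Im l))"
    using le by (simp add: lborel.emeasure_pair_measure_Times ennreal_mult)
  also have "(Re u - Re l) * (Im u - Im l) = (\<Prod>b\<in>Basis. (u - l) \<bullet> b)"
    by (simp add: Basis_complex_def inner_complex_def)
  finally show "emeasure (distr (lborel \<Otimes>\<^sub>M lborel) borel (\<lambda>(x,y). Complex x y)) (box l u) = (\<Prod>b\<in>Basis. (u - l) \<bullet> b)" .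
qed simp

lemma nn_integral_complex_lborel:
  assumes [measurable]: "f \<in> borel_measurable (borel :: complex measure)"
  shows "(\<integral>\<^sup>+z. f z \<partial>lborel) = (\<integral>\<^sup>+x. \<integral>\<^sup>+y. f (Complex x y) \<partial>lborel \<partial>lborel)"
proof -
  have meas: "(\<lambda>(x,y). Complex x y) \<in> borel_measurable (lborel \<Otimes>\<^sub>M (lborel::real measure))"
    by (rule Complex_pair_measurable)
  have "(\<integral>\<^sup>+z. f z \<partial>lborel) = (\<integral>\<^sup>+p. f (case p of (x,y) \<Rightarrow> Complex x y) \<partial>(lborel \<Otimes>\<^sub>M lborel))"
    by (subst lborel_complex_eq) (simp add: nn_integral_distr meas)
  also have "\<dots> = (\<integral>\<^sup>+x. \<integral>\<^sup>+y. (\<lambda>p. f (case p of (x,y) \<Rightarrow> Complex x y)) (x, y) \<partial>lborel \<partial>lborel)"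
    by (rule lborel.nn_integral_fst[symmetric]) (rule measurable_compose[OF meas assms])
  also have "\<dots> = (\<integral>\<^sup>+x. \<integral>\<^sup>+y. f (Complex x y) \<partial>lborel \<partial>lborel)" by simp
  finally show ?thesis .
qed

lemma gauss_abs_even:
  "(\<integral>\<^sup>+u. ennreal (\<bar>u\<bar>^(2*k) * exp (-(u\<^sup>2))) \<partial>lborel) = ennreal (sqrt pi * (fact (2 * k) / (2 ^ (2 * k) * fact k)))"
proof -
  have "has_bochner_integral lborel (\<lambda>x::real. exp (-x\<^sup>2)*x^(2 * k)) (2 *\<^sub>R ((sqrt pi / 2) * (fact (2 * k) / (2 ^ (2 * k) * fact k))))"
    by (rule has_bochner_integral_even_function[OF gaussian_moment_even_pos]) simp
  then have h: "has_bochner_integral lborel (\<lambda>u::real. \<bar>u\<bar>^(2*k) * exp (-(u\<^sup>2))) (sqrt pi * (fact (2 * k) / (2 ^ (2 * k) * fact k)))"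
    by (simp add: power_even_abs mult.commute)
  show ?thesis
    using h by (subst nn_integral_eq_integrable) (auto simp: has_bochner_integral_iff)
qed

lemma gauss_abs_odd:
  "(\<integral>\<^sup>+u. ennreal (\<bar>u\<bar>^(2*k+1) * exp (-(u\<^sup>2))) \<partial>lborel) = ennreal (fact k)"
proof -
  have "has_bochner_integral lborel (\<lambda>x::real. indicator {0..} x *\<^sub>R (exp (-x\<^sup>2)*\<bar>x\<bar>^(2 * k + 1))) (fact k / 2)"
    by (rule has_bochner_integral_cong[THEN iffD1, OF _ _ _ gaussian_moment_odd_pos[of k]]) auto
  from has_bochner_integral_even_function[OF this]
  have "has_bochner_integral lborel (\<lambda>x::real. exp (-x\<^sup>2)*\<bar>x\<bar>^(2 * k + 1)) (fact k)"
    by simp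
  then have h: "has_bochner_integral lborel (\<lambda>u::real. \<bar>u\<bar>^(2*k+1) * exp (-(u\<^sup>2))) (fact k)"
    by (simp add: mult.commute)
  show ?thesis
    using h by (subst nn_integral_eq_integrable) (auto simp: has_bochner_integral_iff)
qed

lemma cauchy_nn_integral:
  "(\<integral>\<^sup>+t. ennreal (1 / (1 + t\<^sup>2)) \<partial>lborel) = ennreal pi"
proof -
  have "(\<integral>\<^sup>+x. ennreal (1 / (1 + x\<^sup>2)) * indicator {0..} x \<partial>lborel) = ennreal (pi / 2 - arctan 0)"
  proof (rule nn_integral_FTC_atLeast)
    show "(arctan \<longlongrightarrow> pi / 2) at_top" by (rule tendsto_arctan_at_top)
  qed (auto intro!: derivative_eq_intros simp: add_nonneg_eq_0_iff field_simps power2_eq_square)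
  moreover have "(\<integral>\<^sup>+x. ennreal (indicator {0..} x *\<^sub>R (1 / (1 + x\<^sup>2))) \<partial>lborel) = (\<integral>\<^sup>+x. ennreal (1 / (1 + x\<^sup>2)) * indicator {0..} x \<partial>lborel)"
    by (intro nn_integral_cong) (simp split: split_indicator)
  ultimately have "has_bochner_integral lborel (\<lambda>x. indicator {0..} x *\<^sub>R (1 / (1 + x\<^sup>2))) (pi / 2)"
    by (intro has_bochner_integral_nn_integral) auto
  from has_bochner_integral_even_function[OF this]
  have h: "has_bochner_integral lborel (\<lambda>x::real. 1 / (1 + x\<^sup>2)) pi" by simp
  show ?thesis
    using h by (subst nn_integral_eq_integrable) (auto simp: has_bochner_integral_iff)
qed

lemma radial_moment:
  fixes \<sigma> Jm :: real and m :: nat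
  assumes \<sigma>: "\<sigma> > 0" and Jnn: "0 \<le> Jm"
    and J: "(\<integral>\<^sup>+u. ennreal (\<bar>u\<bar>^(m+1) * exp (-(u\<^sup>2))) \<partial>lborel) = ennreal Jm"
  shows "(\<integral>\<^sup>+z. CN_density (\<sigma>\<^sup>2) z * ennreal (cmod z ^ m) \<partial>lborel) = ennreal (\<sigma>^m * Jm)"
proof -
  define g where "g x y = exp (-(x\<^sup>2+y\<^sup>2)/\<sigma>\<^sup>2)/(pi*\<sigma>\<^sup>2) * sqrt (x\<^sup>2+y\<^sup>2)^m" for x y :: real
  define H where "H x t = \<bar>x\<bar> * (exp (-(x\<^sup>2*(1+t\<^sup>2))/\<sigma>\<^sup>2)/(pi*\<sigma>\<^sup>2) * (\<bar>x\<bar> * sqrt (1+t\<^sup>2))^m)" for x t :: real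
  have gnn: "0 \<le> g x y" for x y by (simp add: g_def)
  have Hnn: "0 \<le> H x t" for x t by (simp add: H_def)
  have step1: "(\<integral>\<^sup>+z. CN_density (\<sigma>\<^sup>2) z * ennreal (cmod z ^ m) \<partial>lborel) = (\<integral>\<^sup>+x. \<integral>\<^sup>+y. ennreal (g x y) \<partial>lborel \<partial>lborel)"
  proof (subst nn_integral_complex_lborel)
    show "(\<lambda>z. CN_density (\<sigma>\<^sup>2) z * ennreal (cmod z ^ m)) \<in> borel_measurable borel"
      unfolding CN_density_def by measurable
    show "(\<integral>\<^sup>+x. \<integral>\<^sup>+y. CN_density (\<sigma>\<^sup>2) (Complex x y) * ennreal (cmod (Complex x y) ^ m) \<partial>lborel \<partial>lborel) =
      (\<integral>\<^sup>+x. \<integral>\<^sup>+y. ennreal (g x y) \<partial>lborel \<partial>lborel)"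
    proof (intro nn_integral_cong)
      fix x y :: real
      have "cmod (Complex x y) * cmod (Complex x y) = x\<^sup>2 + y\<^sup>2"
        by (simp add: complex_norm)
      then show "CN_density (\<sigma>\<^sup>2) (Complex x y) * ennreal (cmod (Complex x y) ^ m) = ennreal (g x y)"
        unfolding CN_density_def g_def
        by (simp add: ennreal_mult[symmetric] complex_norm)
    qed
  qed
  have step2: "AE x in lborel. (\<integral>\<^sup>+y. ennreal (g x y) \<partial>lborel) = (\<integral>\<^sup>+t. ennreal (H x t) \<partial>lborel)"
    using AE_lborel_singleton[of 0]
  proof eventually_elim
    case (elim x)
    have "(\<integral>\<^sup>+y. ennreal (g x y) \<partial>lborel) = ennreal \<bar>x\<bar> * (\<integral>\<^sup>+t. ennreal (g x (0 + x * t)) \<partial>lborel)"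
      by (rule nn_integral_real_affine) (auto simp: g_def elim)
    also have "\<dots> = (\<integral>\<^sup>+t. ennreal \<bar>x\<bar> * ennreal (g x (x * t)) \<partial>lborel)"
      by (subst nn_integral_cmult) (auto simp: g_def)
    also have "\<dots> = (\<integral>\<^sup>+t. ennreal (H x t) \<partial>lborel)"
    proof (intro nn_integral_cong)
      fix t :: real
      have e1: "x\<^sup>2 + (x*t)\<^sup>2 = x\<^sup>2*(1+t\<^sup>2)" by (simp add: algebra_simps power2_eq_square)
      have e2: "sqrt (x\<^sup>2*(1+t\<^sup>2)) = \<bar>x\<bar> * sqrt (1+t\<^sup>2)" by (simp add: real_sqrt_mult)
      show "ennreal \<bar>x\<bar> * ennreal (g x (x * t)) = ennreal (H x t)"
        unfolding g_def H_def e1 e2 by (simp add: ennreal_mult[symmetric])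
    qed
    finally show ?case .
  qed
  have step3: "(\<integral>\<^sup>+x. \<integral>\<^sup>+t. ennreal (H x t) \<partial>lborel \<partial>lborel) = (\<integral>\<^sup>+t. \<integral>\<^sup>+x. ennreal (H x t) \<partial>lborel \<partial>lborel)"
    by (rule lborel_pair.Fubini'[symmetric]) (simp add: H_def)
  have step4: "(\<integral>\<^sup>+x. ennreal (H x t) \<partial>lborel) = ennreal (\<sigma>^m * Jm / pi) * ennreal (1 / (1 + t\<^sup>2))" for t
  proof -
    define c where "c = \<sigma> / sqrt (1 + t\<^sup>2)"
    have sq: "sqrt (1 + t\<^sup>2) > 0" by (simp add: add_pos_nonneg)
    have c: "c > 0" using \<sigma> sq by (simp add: c_def)
    have c2: "c\<^sup>2 * (1 + t\<^sup>2) = \<sigma>\<^sup>2"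
      using sq by (simp add: c_def power_divide add_nonneg_eq_0_iff)
    have csq: "c * sqrt (1 + t\<^sup>2) = \<sigma>" using sq by (simp add: c_def)
    have "(\<integral>\<^sup>+x. ennreal (H x t) \<partial>lborel) = ennreal \<bar>c\<bar> * (\<integral>\<^sup>+u. ennreal (H (0 + c * u) t) \<partial>lborel)"
      using c by (intro nn_integral_real_affine) (auto simp: H_def)
    also have "\<dots> = ennreal c * (\<integral>\<^sup>+u. ennreal (c * \<sigma>^m / (pi * \<sigma>\<^sup>2)) * ennreal (\<bar>u\<bar>^(m+1) * exp (-(u\<^sup>2))) \<partial>lborel)"
    proof -
      have "H (c * u) t = c * \<sigma>^m / (pi * \<sigma>\<^sup>2) * (\<bar>u\<bar>^(m+1) * exp (-(u\<^sup>2)))" for u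
      proof -
        have a: "(c*u)\<^sup>2*(1+t\<^sup>2) = \<sigma>\<^sup>2 * u\<^sup>2" using c2 by (metis mult.commute mult.left_commute power_mult_distrib)
        have b: "\<bar>c*u\<bar> * sqrt (1+t\<^sup>2) = \<sigma> * \<bar>u\<bar>" using csq c by (simp add: abs_mult algebra_simps)
        show ?thesis unfolding H_def a b using \<sigma> c
          by (simp add: abs_mult power_mult_distrib field_simps)
      qed
      then show ?thesis using c \<sigma>
        by (auto intro!: nn_integral_cong simp: ennreal_mult[symmetric])
    qed
    also have "\<dots> = ennreal c * (ennreal (c * \<sigma>^m / (pi * \<sigma>\<^sup>2)) * ennreal Jm)"
      using J by (subst nn_integral_cmult) simp_all
    also have "\<dots> = ennreal (c * (c * \<sigma>^m / (pi * \<sigma>\<^sup>2) * Jm))"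
      using c \<sigma> Jnn by (simp add: ennreal_mult[symmetric])
    also have "c * (c * \<sigma>^m / (pi * \<sigma>\<^sup>2) * Jm) = \<sigma>^m * Jm / pi * (1 / (1 + t\<^sup>2))"
    proof -
      have cc: "c * c = \<sigma>\<^sup>2 / (1 + t\<^sup>2)" using c2 by (simp add: field_simps power2_eq_square add_nonneg_eq_0_iff)
      have "c * (c * \<sigma>^m / (pi * \<sigma>\<^sup>2) * Jm) = (c * c) * (\<sigma>^m * Jm / (pi * \<sigma>\<^sup>2))"
        by (simp add: mult_ac)
      also have "\<dots> = (\<sigma>\<^sup>2 / (1 + t\<^sup>2)) * (\<sigma>^m * Jm / (pi * \<sigma>\<^sup>2))" by (simp only: cc)
      also have "\<dots> = \<sigma>^m * Jm / pi * (1 / (1 + t\<^sup>2))" using \<sigma> by (simp add: field_simps)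
      finally show ?thesis .
    qed
    finally show ?thesis using \<sigma> Jnn by (simp add: ennreal_mult[symmetric])
  qed
  have "(\<integral>\<^sup>+z. CN_density (\<sigma>\<^sup>2) z * ennreal (cmod z ^ m) \<partial>lborel) = (\<integral>\<^sup>+x. \<integral>\<^sup>+t. ennreal (H x t) \<partial>lborel \<partial>lborel)"
    unfolding step1 by (rule nn_integral_cong_AE[OF step2])
  also have "\<dots> = (\<integral>\<^sup>+t. ennreal (\<sigma>^m * Jm / pi) * ennreal (1 / (1 + t\<^sup>2)) \<partial>lborel)"
    unfolding step3 step4 ..
  also have "\<dots> = ennreal (\<sigma>^m * Jm / pi) * ennreal pi"
    by (subst nn_integral_cmult) (auto simp: cauchy_nn_integral)
  also have "\<dots> = ennreal (\<sigma>^m * Jm)"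
    using \<sigma> Jnn by (simp add: ennreal_mult[symmetric])
  finally show ?thesis .
qed

fun sm :: "(nat \<Rightarrow> real) \<Rightarrow> nat \<Rightarrow> nat \<Rightarrow> real" where
  "sm mu 0 k = (if k = 0 then 1 else 0)"
| "sm mu (Suc b) k = (\<Sum>j\<le>k. real (k choose j) * mu j * sm mu b (k - j))"

lemma sm_closed:
  assumes "mu 0 = 1"
  shows "sm mu b 0 = 1 \<and> sm mu b 1 = real b * mu 1 \<and>
    sm mu b 2 = real b * mu 2 + real b * (real b - 1) * mu 1 ^ 2 \<and>
    sm mu b 3 = real b * mu 3 + 3 * real b * (real b - 1) * mu 2 * mu 1
       + real b * (real b - 1) * (real b - 2) * mu 1 ^ 3 \<and>
    sm mu b 4 = real b * mu 4 + 4 * real b * (real b - 1) * mu 3 * mu 1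
       + 3 * real b * (real b - 1) * mu 2 ^ 2
       + 6 * real b * (real b - 1) * (real b - 2) * mu 2 * mu 1 ^ 2
       + real b * (real b - 1) * (real b - 2) * (real b - 3) * mu 1 ^ 4"
proof (induction b)
  case 0
  then show ?case by simp
next
  case (Suc b)
  have e: "(4::nat) = Suc 3" "(3::nat) = Suc 2" "(2::nat) = Suc 1" by simp_all
  show ?case using Suc assms
    apply (simp add: e numeral_eq_Suc)
    apply (simp add: algebra_simps power2_eq_square power3_eq_cube)
    done
qed

context prob_space
begin

lemma binom_mom:
  fixes U V :: "'a \<Rightarrow> real"
  assumes ind: "indep_var borel U borel V"
    and U: "\<And>j. j \<le> K \<Longrightarrow> integrable M (\<lambda>\<omega>. U \<omega> ^ j) \<and> expectation (\<lambda>\<omega>. U \<omega> ^ j) = mu j"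
    and V: "\<And>j. j \<le> K \<Longrightarrow> integrable M (\<lambda>\<omega>. V \<omega> ^ j) \<and> expectation (\<lambda>\<omega>. V \<omega> ^ j) = nu j"
    and k: "k \<le> K"
  shows "integrable M (\<lambda>\<omega>. (U \<omega> + V \<omega>)^k) \<and>
    expectation (\<lambda>\<omega>. (U \<omega> + V \<omega>)^k) = (\<Sum>j\<le>k. real (k choose j) * mu j * nu (k - j))"
proof -
  have pair: "integrable M (\<lambda>\<omega>. U \<omega> ^ j * V \<omega> ^ (k - j)) \<and>
      expectation (\<lambda>\<omega>. U \<omega> ^ j * V \<omega> ^ (k - j)) = mu j * nu (k - j)" if "j \<le> k" for j
  proof -
    have iv: "indep_var borel ((\<lambda>x. x ^ j) \<circ> U) borel ((\<lambda>x. x ^ (k - j)) \<circ> V)"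
      by (rule indep_var_compose[OF ind]) auto
    have iU: "integrable M (\<lambda>\<omega>. U \<omega> ^ j)" and eU: "expectation (\<lambda>\<omega>. U \<omega> ^ j) = mu j"
      using U[of j] that k by auto
    have iV: "integrable M (\<lambda>\<omega>. V \<omega> ^ (k - j))" and eV: "expectation (\<lambda>\<omega>. V \<omega> ^ (k - j)) = nu (k - j)"
      using V[of "k - j"] that k by auto
    show ?thesis
      using indep_var_lebesgue_integral[OF iv] indep_var_integrable[OF iv] iU iV eU eV
      by (simp add: comp_def)
  qed
  have eq: "(\<lambda>\<omega>. (U \<omega> + V \<omega>)^k) = (\<lambda>\<omega>. \<Sum>j\<le>k. real (k choose j) * (U \<omega> ^ j * V \<omega> ^ (k - j)))"
    by (simp add: binomial_ring mult.assoc)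
  have int: "integrable M (\<lambda>\<omega>. \<Sum>j\<le>k. real (k choose j) * (U \<omega> ^ j * V \<omega> ^ (k - j)))"
  proof (rule Bochner_Integration.integrable_sum)
    fix j assume "j \<in> {..k}"
    then show "integrable M (\<lambda>\<omega>. real (k choose j) * (U \<omega> ^ j * V \<omega> ^ (k - j)))"
      using pair[of j] by (intro integrable_mult_right) auto
  qed
  have "expectation (\<lambda>\<omega>. \<Sum>j\<le>k. real (k choose j) * (U \<omega> ^ j * V \<omega> ^ (k - j)))
      = (\<Sum>j\<le>k. real (k choose j) * expectation (\<lambda>\<omega>. U \<omega> ^ j * V \<omega> ^ (k - j)))"
    using pair by (subst Bochner_Integration.integral_sum) (auto intro!: integrable_mult_right)
  also have "\<dots> = (\<Sum>j\<le>k. real (k choose j) * mu j * nu (k - j))"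
    using pair by (intro sum.cong) auto
  finally show ?thesis using int eq by simp
qed

lemma sum_mom:
  fixes W :: "'i \<Rightarrow> 'a \<Rightarrow> real"
  assumes fin: "finite P" and ind: "indep_vars (\<lambda>_. borel) W P"
    and W: "\<And>i j. i \<in> P \<Longrightarrow> j \<le> K \<Longrightarrow> integrable M (\<lambda>\<omega>. W i \<omega> ^ j) \<and> expectation (\<lambda>\<omega>. W i \<omega> ^ j) = mu j"
    and k: "k \<le> K"
  shows "integrable M (\<lambda>\<omega>. (\<Sum>i\<in>P. W i \<omega>)^k) \<and> expectation (\<lambda>\<omega>. (\<Sum>i\<in>P. W i \<omega>)^k) = sm mu (card P) k"
  using fin ind W k
proof (induction P arbitrary: k rule: finite_induct)
  case empty
  then show ?case by (cases k) (auto simp: prob_space)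
next
  case (insert i F)
  have indF: "indep_vars (\<lambda>_. borel) W F"
    using insert.prems(1) by (rule indep_vars_subset) auto
  have iv: "indep_var borel (W i) borel (\<lambda>\<omega>. \<Sum>i\<in>F. W i \<omega>)"
    by (rule indep_vars_sum[OF insert.hyps(1,2) insert.prems(1)])
  have "integrable M (\<lambda>\<omega>. (W i \<omega> + (\<Sum>i\<in>F. W i \<omega>))^k) \<and>
    expectation (\<lambda>\<omega>. (W i \<omega> + (\<Sum>i\<in>F. W i \<omega>))^k) = (\<Sum>j\<le>k. real (k choose j) * mu j * sm mu (card F) (k - j))"
  proof (rule binom_mom[OF iv _ _ insert.prems(3)])
    fix j assume j: "j \<le> K"
    show "integrable M (\<lambda>\<omega>. W i \<omega> ^ j) \<and> expectation (\<lambda>\<omega>. W i \<omega> ^ j) = mu j"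
      using insert.prems(2)[of i j] j by auto
    show "integrable M (\<lambda>\<omega>. (\<Sum>i\<in>F. W i \<omega>) ^ j) \<and> expectation (\<lambda>\<omega>. (\<Sum>i\<in>F. W i \<omega>) ^ j) = sm mu (card F) j"
      using insert.IH[OF indF _ j] insert.prems(2) by auto
  qed
  then show ?case using insert.hyps by simp
qed

end

definition cm :: "nat \<Rightarrow> real" where
  "cm m = (if m = 0 then 1 else if m = 1 then sqrt pi / 2 else if m = 2 then 1
           else if m = 3 then 3 * sqrt pi / 4 else 2)"

lemma CN_nn_moment:
  assumes \<sigma>: "\<sigma> > 0" and m: "1 \<le> m" "m \<le> 4"
  shows "(\<integral>\<^sup>+z. CN_density (\<sigma>\<^sup>2) z * ennreal (cmod z ^ m) \<partial>lborel) = ennreal (\<sigma>^m * cm m)"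
proof -
  have "m = 1 \<or> m = 2 \<or> m = 3 \<or> m = 4" using m by auto
  then show ?thesis
  proof (elim disjE)
    assume "m = 1"
    have J: "(\<integral>\<^sup>+u. ennreal (\<bar>u\<bar>^(1+1) * exp (-(u\<^sup>2))) \<partial>lborel) = ennreal (sqrt pi / 2)"
      using gauss_abs_even[of 1] by (simp add: power2_eq_square)
    show ?thesis using radial_moment[OF \<sigma> _ J] \<open>m = 1\<close> by (simp add: cm_def)
  next
    assume "m = 2"
    have J: "(\<integral>\<^sup>+u. ennreal (\<bar>u\<bar>^(2+1) * exp (-(u\<^sup>2))) \<partial>lborel) = ennreal 1"
      using gauss_abs_odd[of 1] by simp
    show ?thesis using radial_moment[OF \<sigma> _ J] \<open>m = 2\<close> by (simp add: cm_def)
  next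
    assume "m = 3"
    have J: "(\<integral>\<^sup>+u. ennreal (\<bar>u\<bar>^(3+1) * exp (-(u\<^sup>2))) \<partial>lborel) = ennreal (3 * sqrt pi / 4)"
      using gauss_abs_even[of 2] by (simp add: fact_numeral)
    show ?thesis using radial_moment[OF \<sigma> _ J] \<open>m = 3\<close> by (simp add: cm_def)
  next
    assume "m = 4"
    have J: "(\<integral>\<^sup>+u. ennreal (\<bar>u\<bar>^(4+1) * exp (-(u\<^sup>2))) \<partial>lborel) = ennreal 2"
      using gauss_abs_odd[of 2] by (simp add: fact_numeral)
    show ?thesis using radial_moment[OF \<sigma> _ J] \<open>m = 4\<close> by (simp add: cm_def)
  qed
qed

lemma (in prob_space) CN_moment:
  assumes \<sigma>: "\<sigma> > 0" and D: "distributed M lborel h (CN_density (\<sigma>\<^sup>2))" and m: "m \<le> 4"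
  shows "integrable M (\<lambda>\<omega>. cmod (h \<omega>) ^ m) \<and> expectation (\<lambda>\<omega>. cmod (h \<omega>) ^ m) = \<sigma>^m * cm m"
proof (cases "m = 0")
  case True
  then show ?thesis by (simp add: cm_def prob_space)
next
  case False
  have hm[measurable]: "h \<in> measurable M borel"
    using distributed_measurable[OF D] by simp
  have "(\<integral>\<^sup>+\<omega>. ennreal (cmod (h \<omega>) ^ m) \<partial>M) = (\<integral>\<^sup>+z. CN_density (\<sigma>\<^sup>2) z * ennreal (cmod z ^ m) \<partial>lborel)"
    by (rule distributed_nn_integral[OF D, symmetric]) simp
  also have "\<dots> = ennreal (\<sigma>^m * cm m)"
    using CN_nn_moment[OF \<sigma>, of m] False m by simp
  finally have "(\<integral>\<^sup>+\<omega>. ennreal (cmod (h \<omega>) ^ m) \<partial>M) = ennreal (\<sigma>^m * cm m)" .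
  moreover have "0 \<le> \<sigma>^m * cm m" using \<sigma> by (simp add: cm_def)
  ultimately show ?thesis
    by (subst (asm) nn_integral_eq_integrable) auto
qed

lemma gamma_nn_moment:
  fixes k p :: real and j :: nat
  assumes k: "k > 0" and p: "p > 0"
  shows "(\<integral>\<^sup>+x. ennreal (x^j * gamma_density k p x) \<partial>lborel) = ennreal (p^j * Gamma (k + j) / Gamma k)"
proof -
  have Gk: "Gamma k > 0" using k by simp
  have "(\<integral>\<^sup>+x. ennreal (x^j * gamma_density k p x) \<partial>lborel)
      = ennreal \<bar>p\<bar> * (\<integral>\<^sup>+u. ennreal ((0 + p * u)^j * gamma_density k p (0 + p * u)) \<partial>lborel)"
    using p by (intro nn_integral_real_affine) (auto simp: gamma_density_def)
  also have "\<dots> = ennreal p * (\<integral>\<^sup>+u. ennreal (p^j / Gamma k / p) * ennreal (indicator {0..} u * u powr (k + j - 1) / exp u) \<partial>lborel)"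
  proof -
    have "(p * u)^j * gamma_density k p (p * u) = p^j / Gamma k / p * (indicator {0..} u * u powr (k + j - 1) / exp u)" for u
    proof (cases "u > 0")
      case True
      have e1: "(p*u) powr (k - 1) = p powr (k - 1) * u powr (k - 1)" using True p by (simp add: powr_mult)
      have e2: "u powr (k + j - 1) = u^j * u powr (k - 1)"
        using True by (simp add: powr_add[symmetric] powr_realpow[symmetric] algebra_simps)
      have e3: "p powr k = p * p powr (k - 1)"
      proof -
        have "p powr k = p powr (1 + (k - 1))" by simp
        also have "\<dots> = p powr 1 * p powr (k - 1)" by (rule powr_add)
        finally show ?thesis using p by simp
      qed
      have e4: "- (p * u) / p = - u" using p by simp
      show ?thesis using True p Gk
        unfolding gamma_density_def e1 e2 e3
        by (simp add: e4 exp_minus field_simps power_mult_distrib)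
    next
      case False
      then show ?thesis using p
        by (cases "u = 0") (auto simp: gamma_density_def zero_less_mult_iff indicator_def)
    qed
    then show ?thesis using p Gk
      by (auto intro!: nn_integral_cong simp: ennreal_mult[symmetric] divide_nonneg_nonneg)
  qed
  also have "\<dots> = ennreal p * (ennreal (p^j / Gamma k / p) * ennreal (Gamma (k + j)))"
    using k by (subst nn_integral_cmult) (auto simp: Gamma_conv_nn_integral_real)
  also have "\<dots> = ennreal (p^j * Gamma (k + j) / Gamma k)"
    using p Gk k by (simp add: ennreal_mult[symmetric] field_simps)
  finally show ?thesis .
qed

lemma gamma_moments:
  fixes k p :: real
  assumes k: "k > 0" and p: "p > 0"
  shows "(\<integral>x. x * gamma_density k p x \<partial>lborel) = k * p \<and> (\<integral>x. x^2 * gamma_density k p x \<partial>lborel) = k * (k + 1) * p^2"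
proof -
  have Gk: "Gamma k > 0" using k by simp
  have np: "z \<notin> \<int>\<^sub>\<le>\<^sub>0" if "z > 0" for z :: real using that by (auto elim!: nonpos_Ints_cases)
  have G1: "Gamma (k + 1) = k * Gamma k" using np[OF k] by (rule Gamma_plus1)
  have G2: "Gamma (k + 2) = (k + 1) * k * Gamma k"
  proof -
    have "Gamma (k + 2) = Gamma ((k + 1) + 1)" by (simp add: add.assoc)
    also have "\<dots> = (k + 1) * Gamma (k + 1)" using np[of "k+1"] k by (intro Gamma_plus1) auto
    finally show ?thesis using G1 by simp
  qed
  have gdnn: "0 \<le> x^j * gamma_density k p x" for x j
    using p k by (cases "x > 0") (auto simp: gamma_density_def intro!: divide_nonneg_pos mult_nonneg_nonneg)
  have meas: "(\<lambda>x. x^j * gamma_density k p x) \<in> borel_measurable lborel" for j :: nat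
    unfolding gamma_density_def by measurable
  have I: "integrable lborel (\<lambda>x. x^j * gamma_density k p x) \<and> (\<integral>x. x^j * gamma_density k p x \<partial>lborel) = p^j * Gamma (k + j) / Gamma k" for j :: nat
  proof -
    have "0 \<le> p^j * Gamma (k + j) / Gamma k" using p k Gk by (simp add: add_pos_nonneg)
    then show ?thesis
      using gamma_nn_moment[OF k p, of j] nn_integral_eq_integrable[OF meas[of j], of "p^j * Gamma (k + j) / Gamma k"] gdnn
      by auto
  qed
  have "(\<integral>x. x^2 * gamma_density k p x \<partial>lborel) = p^2 * Gamma (k + 2) / Gamma k"
    using I[of 2] by simp
  also have "\<dots> = k * (k + 1) * p^2" using G2 Gk by simp
  finally show ?thesis
    using I[of 1] G1 Gk by simp
qed

lemma gamma_match:
  fixes k p m1 m2 :: real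
  assumes k: "k > 0" and p: "p > 0" and m1: "m1 > 0"
  shows "(k * p = m1 \<and> k * (k + 1) * p^2 = m2) \<longleftrightarrow> (k = m1^2 / (m2 - m1^2) \<and> p = (m2 - m1^2) / m1)"
proof
  assume h: "k * p = m1 \<and> k * (k + 1) * p^2 = m2"
  then have d: "m2 - m1^2 = k * p^2"
  proof -
    have "m2 = k * (k + 1) * p^2" "m1 = k * p" using h by auto
    then show ?thesis by (simp add: power2_eq_square algebra_simps)
  qed
  show "k = m1^2 / (m2 - m1^2) \<and> p = (m2 - m1^2) / m1"
    using h k p unfolding d by (auto simp: field_simps power2_eq_square)
next
  assume h: "k = m1^2 / (m2 - m1^2) \<and> p = (m2 - m1^2) / m1"
  have "m2 - m1^2 \<noteq> 0" using h k by auto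
  then have "m2 - m1^2 > 0" using h k m1 by (metis divide_pos_neg linorder_neqE_linordered_idom not_less_iff_gr_or_eq zero_less_power2 order.asym)
  then show "k * p = m1 \<and> k * (k + 1) * p^2 = m2"
    using h m1 by (auto simp: field_simps power2_eq_square)
qed

lemma sum_binom2: "(\<Sum>j\<le>2. real (2 choose j) * f j * g (2 - j)) = f 0 * g 2 + 2 * f 1 * g 1 + f 2 * g 0"
proof -
  have e: "(2::nat) = Suc 1" by simp
  show ?thesis by (simp add: e)
qed

lemma sum_binom4: "(\<Sum>j\<le>4. real (4 choose j) * f j * g (4 - j)) =
   f 0 * g 4 + 4 * f 1 * g 3 + 6 * f 2 * g 2 + 4 * f 3 * g 1 + f 4 * g 0"
proof -
  have e: "(4::nat) = Suc 3" "(3::nat) = Suc 2" "(2::nat) = Suc 1" by simp_all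
  show ?thesis by (simp add: e numeral_eq_Suc)
qed

lemma alg1:
  fixes a b :: nat and alpha beta gamma gbar :: real
  defines "mu \<equiv> \<lambda>k. (alpha*beta)^k * cm k ^ 2" and "nu \<equiv> \<lambda>k. alpha^(2*k) * cm (2*k)"
    and "rho \<equiv> \<lambda>k. gamma^k * cm k"
  shows "gbar * ((\<Sum>j\<le>2. real (2 choose j) * rho j * sm mu b (2-j)) + sm nu a 1) =
      gbar * ((real a + real b)^2 * pi^2/16 * alpha^2 * beta^2
               + alpha^2 * beta^2 * ((real a + real b) * (1 - pi^2/8 * real a - pi^2/16) + pi^2/16 * real a * (real a+1) - real a)
               + alpha * beta * gamma * (pi * sqrt pi / 4) * real b + real a * alpha^2 + gamma^2)"
proof -
  have mu0: "mu 0 = 1" and mu1: "mu 1 = alpha * beta * pi / 4" and mu2: "mu 2 = alpha^2 * beta^2"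
    unfolding mu_def cm_def by (simp_all add: power_divide power_mult_distrib)
  have nu0: "nu 0 = 1" and nu1: "nu 1 = alpha^2" unfolding nu_def cm_def by simp_all
  have r: "rho 0 = 1" "rho 1 = gamma * sqrt pi / 2" "rho 2 = gamma^2" unfolding rho_def cm_def by simp_all
  have s: "sm mu b 0 = 1" "sm mu b 1 = real b * (alpha * beta * pi / 4)"
     "sm mu b 2 = real b * (alpha^2 * beta^2) + real b * (real b - 1) * (alpha * beta * pi / 4) ^ 2"
    using sm_closed[of mu b, OF mu0] unfolding mu1 mu2 by auto
  have z: "sm nu a 1 = real a * alpha^2" using sm_closed[of nu a, OF nu0] unfolding nu1 by auto
  show ?thesis
    unfolding sum_binom2 r s z
    by (simp add: field_simps power2_eq_square)
qed

lemma alg2: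
  fixes a b :: nat and alpha beta gamma gbar :: real
  defines "mu \<equiv> \<lambda>k. (alpha*beta)^k * cm k ^ 2" and "nu \<equiv> \<lambda>k. alpha^(2*k) * cm (2*k)"
    and "rho \<equiv> \<lambda>k. gamma^k * cm k"
  defines "B \<equiv> real b" and "a' \<equiv> real a"
  shows "gbar^2 * ((\<Sum>j\<le>4. real (4 choose j) * rho j * sm mu b (4-j))
           + 2 * (\<Sum>j\<le>2. real (2 choose j) * rho j * sm mu b (2-j)) * sm nu a 1 + sm nu a 2) =
    gbar^2 * (2 * gamma^4 + 6 * B * (1 + pi^2/16 * (B-1)) * gamma^2 * alpha^2 * beta^2
               + 3 * pi * sqrt pi / 4 * B * gamma^3 * alpha * beta
               + (4*B + 9*pi^2/16 * B*(B-1) + 3*B*(B-1) + 6*pi^2/16 * B*(B-1)*(B-2)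
              + pi^4/256 * B*(B-1)*(B-2)*(B-3)) * alpha^4 * beta^4
               + 2 * sqrt pi * (9*pi/16 * B + 3*pi/4 * B*(B-1) + pi^3/64 * B*(B-1)*(B-2)) * alpha^3 * beta^3 * gamma
               + 2 * a' * gamma^2 * alpha^2 + 2 * B * (1 + pi^2/16 * (B-1)) * a' * alpha^4 * beta^2
               + pi * sqrt pi / 2 * B * a' * alpha^3 * gamma * beta + a' * (a'+1) * alpha^4)"
proof -
  have mu0: "mu 0 = 1" and mu1: "mu 1 = alpha * beta * pi / 4" and mu2: "mu 2 = alpha^2 * beta^2"
    and mu3: "mu 3 = alpha^3 * beta^3 * (9 * pi / 16)" and mu4: "mu 4 = 4 * alpha^4 * beta^4"
    unfolding mu_def cm_def by (simp_all add: power_divide power_mult_distrib)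
  have nu0: "nu 0 = 1" and nu1: "nu 1 = alpha^2" and nu2: "nu 2 = 2 * alpha^4" unfolding nu_def cm_def by simp_all
  have r: "rho 0 = 1" "rho 1 = gamma * sqrt pi / 2" "rho 2 = gamma^2" "rho 3 = gamma^3 * (3 * sqrt pi / 4)"
    "rho 4 = 2 * gamma^4" unfolding rho_def cm_def by simp_all
  have s: "sm mu b 0 = 1" "sm mu b 1 = B * (alpha * beta * pi / 4)"
     "sm mu b 2 = B * (alpha^2 * beta^2) + B * (B - 1) * (alpha * beta * pi / 4) ^ 2"
     "sm mu b 3 = B * (alpha^3 * beta^3 * (9 * pi / 16)) + 3 * B * (B - 1) * (alpha^2 * beta^2) * (alpha * beta * pi / 4)
       + B * (B - 1) * (B - 2) * (alpha * beta * pi / 4) ^ 3"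
     "sm mu b 4 = B * (4 * alpha^4 * beta^4) + 4 * B * (B - 1) * (alpha^3 * beta^3 * (9 * pi / 16)) * (alpha * beta * pi / 4)
       + 3 * B * (B - 1) * (alpha^2 * beta^2) ^ 2
       + 6 * B * (B - 1) * (B - 2) * (alpha^2 * beta^2) * (alpha * beta * pi / 4) ^ 2
       + B * (B - 1) * (B - 2) * (B - 3) * (alpha * beta * pi / 4) ^ 4"
    using sm_closed[of mu b, OF mu0] unfolding mu1 mu2 mu3 mu4 B_def by auto
  have z: "sm nu a 1 = a' * alpha^2" "sm nu a 2 = a' * (2 * alpha^4) + a' * (a' - 1) * (alpha^2)^2"
    using sm_closed[of nu a, OF nu0] unfolding nu1 nu2 a'_def by auto
  show ?thesis
    unfolding sum_binom2 sum_binom4 r s z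
    by (simp add: field_simps eval_nat_numeral)
qed

lemma meas_RS: "(\<lambda>f. (f 0 + (\<Sum>i\<in>P. f i))^2) \<in> borel_measurable (PiM (insert (0::nat) P) (\<lambda>_. borel :: real measure))"
  by measurable

lemma meas_Z: "(\<lambda>f. (\<Sum>i\<in>P. f i)) \<in> borel_measurable (PiM (P::nat set) (\<lambda>_. borel :: real measure))"
  by measurable

lemma gamma_final:
  fixes m1 m2 :: real
  assumes "m1 > 0"
  shows "\<forall>k p. k > 0 \<and> p > 0 \<longrightarrow>
           (((\<integral>x. x * gamma_density k p x \<partial>lborel) = m1 \<and>
             (\<integral>x. x^2 * gamma_density k p x \<partial>lborel) = m2)
            \<longleftrightarrow> (k = m1^2 / (m2 - m1^2) \<and> p = (m2 - m1^2) / m1))"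
proof (intro allI impI)
  fix k p :: real assume kp: "k > 0 \<and> p > 0"
  then show "((\<integral>x. x * gamma_density k p x \<partial>lborel) = m1 \<and>
             (\<integral>x. x^2 * gamma_density k p x \<partial>lborel) = m2)
            \<longleftrightarrow> (k = m1^2 / (m2 - m1^2) \<and> p = (m2 - m1^2) / m1)"
    using gamma_moments[of k p] gamma_match[of k p m1 m2] assms by auto
qed

theorem proposition2:
  fixes M :: "'s measure"
    and N :: nat and A :: "nat \<Rightarrow> real"
    and alpha beta gamma gbar :: real
    and hUB :: "'s \<Rightarrow> complex" and hUR hRB :: "nat \<Rightarrow> 's \<Rightarrow> complex"
  assumes "prob_space M"
    and "N \<ge> 1"
    and A01: "\<forall>i\<in>{1..N}. A i = 0 \<or> A i = 1"
    and "alpha > 0" and "beta > 0" and "gamma > 0" and "gbar > 0"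
    and indep: "prob_space.indep_vars M (\<lambda>_. borel)
        (\<lambda>j. case j of UB \<Rightarrow> hUB | UR i \<Rightarrow> hUR i | RB i \<Rightarrow> hRB i)
        (insert UB (UR ` {1..N} \<union> RB ` {1..N}))"
    and dUB: "distributed M lborel hUB (CN_density (gamma^2))"
    and dUR: "\<forall>i\<in>{1..N}. distributed M lborel (hUR i) (CN_density (alpha^2))"
    and dRB: "\<forall>i\<in>{1..N}. distributed M lborel (hRB i) (CN_density (beta^2))"
  shows
    "let a = (\<Sum>i=1..N. A i); n = real N; b = n - a;
         gs = (\<lambda>w. rdars_snr N A gbar (hUB w) (\<lambda>i. hUR i w) (\<lambda>i. hRB i w));
         C3 = 9*pi/16 * b + 3*pi/4 * b*(b-1) + pi^3/64 * b*(b-1)*(b-2);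
         C4 = 4*b + 9*pi^2/16 * b*(b-1) + 3*b*(b-1) + 6*pi^2/16 * b*(b-1)*(b-2)
              + pi^4/256 * b*(b-1)*(b-2)*(b-3);
         m1 = gbar * (n^2 * pi^2/16 * alpha^2 * beta^2
               + alpha^2 * beta^2 * (n * (1 - pi^2/8 * a - pi^2/16) + pi^2/16 * a * (a+1) - a)
               + alpha * beta * gamma * (pi * sqrt pi / 4) * b + a * alpha^2 + gamma^2);
         m2 = gbar^2 * (2 * gamma^4 + 6 * b * (1 + pi^2/16 * (b-1)) * gamma^2 * alpha^2 * beta^2
               + 3 * pi * sqrt pi / 4 * b * gamma^3 * alpha * beta
               + C4 * alpha^4 * beta^4 + 2 * sqrt pi * C3 * alpha^3 * beta^3 * gamma
               + 2 * a * gamma^2 * alpha^2 + 2 * b * (1 + pi^2/16 * (b-1)) * a * alpha^4 * beta^2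
               + pi * sqrt pi / 2 * b * a * alpha^3 * gamma * beta + a * (a+1) * alpha^4)
     in (\<integral>w. gs w \<partial>M) = m1 \<and> (\<integral>w. (gs w)^2 \<partial>M) = m2 \<and>
        (\<forall>k p. k > 0 \<and> p > 0 \<longrightarrow>
           (((\<integral>x. x * gamma_density k p x \<partial>lborel) = m1 \<and>
             (\<integral>x. x^2 * gamma_density k p x \<partial>lborel) = m2)
            \<longleftrightarrow> (k = m1^2 / (m2 - m1^2) \<and> p = (m2 - m1^2) / m1)))"
proof -
  interpret prob_space M by (rule assms(1))
  have apos: "alpha > 0" and bpos: "beta > 0" and gpos: "gamma > 0" and gbpos: "gbar > 0"
    using assms(4-7) by auto
  define X :: "chan \<Rightarrow> 's \<Rightarrow> complex" where "X = (\<lambda>j. case j of UB \<Rightarrow> hUB | UR i \<Rightarrow> hUR i | RB i \<Rightarrow> hRB i)"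
  define I where "I = insert UB (UR ` {1..N} \<union> RB ` {1..N})"
  have indX: "indep_vars (\<lambda>_. borel) X I" using indep unfolding X_def I_def .
  define P where "P = {i\<in>{1..N}. A i = 0}"
  define Q where "Q = {i\<in>{1..N}. A i = 1}"
  have finP: "finite P" and finQ: "finite Q" by (simp_all add: P_def Q_def)
  have PQ: "P \<inter> Q = {}" "P \<union> Q = {1..N}" using A01 by (auto simp: P_def Q_def)
  have P0: "0 \<notin> P" and Q0: "0 \<notin> Q" by (auto simp: P_def Q_def)
  define K :: "nat \<Rightarrow> chan set" where "K = (\<lambda>j. if j = 0 then {UB} else {UR j, RB j})"
  define W :: "nat \<Rightarrow> 's \<Rightarrow> real" where
    "W = (\<lambda>j \<omega>. if j = 0 then cmod (hUB \<omega>) else if A j = 0 then cmod (hUR j \<omega>) * cmod (hRB j \<omega>) else cmod (hUR j \<omega>)^2)"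
  have mc: "(\<lambda>f. cmod (f c)) \<in> borel_measurable (PiM C (\<lambda>_. borel :: complex measure))" if "c \<in> C" for c :: chan and C
    using measurable_compose[OF measurable_component_singleton[of c C "\<lambda>_. borel"] borel_measurable_norm] that
    by simp
  have indW: "indep_vars (\<lambda>_. borel) W {0..N}"
  proof -
    have r: "indep_vars (\<lambda>j. PiM (K j) (\<lambda>_. borel)) (\<lambda>j \<omega>. restrict (\<lambda>i. X i \<omega>) (K j)) {0..N}"
      by (rule indep_vars_restrict[OF indX]) (auto simp: K_def I_def disjoint_family_on_def)
    define Wf :: "nat \<Rightarrow> (chan \<Rightarrow> complex) \<Rightarrow> real" where
      "Wf = (\<lambda>j f. if j = 0 then cmod (f UB) else if A j = 0 then cmod (f (UR j)) * cmod (f (RB j)) else cmod (f (UR j))^2)"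
    have "indep_vars (\<lambda>_. borel) (\<lambda>j \<omega>. Wf j (restrict (\<lambda>i. X i \<omega>) (K j))) {0..N}"
    proof (rule indep_vars_compose2[OF r])
      fix j assume "j \<in> {0..N}"
      show "Wf j \<in> borel_measurable (PiM (K j) (\<lambda>_. borel))"
      proof (cases "j = 0")
        case True then show ?thesis by (simp add: Wf_def K_def mc)
      next
        case False
        have u: "UR j \<in> K j" and r: "RB j \<in> K j" using False by (auto simp: K_def)
        show ?thesis
        proof (cases "A j = 0")
          case True
          then show ?thesis using False
            by (simp add: Wf_def) (intro borel_measurable_times mc u r)
        next
          case F2: False
          then show ?thesis using False
            by (simp add: Wf_def) (intro borel_measurable_power mc u)
        qed
      qed
    qed
    moreover have "indep_vars (\<lambda>_. borel) (\<lambda>j \<omega>. Wf j (restrict (\<lambda>i. X i \<omega>) (K j))) {0..N} =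
        indep_vars (\<lambda>_. borel) W {0..N}"
      by (rule indep_vars_cong) (auto simp: Wf_def W_def K_def X_def fun_eq_iff)
    ultimately show ?thesis by simp
  qed
  have mUB: "integrable M (\<lambda>\<omega>. cmod (hUB \<omega>) ^ k) \<and> expectation (\<lambda>\<omega>. cmod (hUB \<omega>) ^ k) = gamma^k * cm k"
    if "k \<le> 4" for k using CN_moment[OF gpos dUB that] .
  have mUR: "integrable M (\<lambda>\<omega>. cmod (hUR i \<omega>) ^ k) \<and> expectation (\<lambda>\<omega>. cmod (hUR i \<omega>) ^ k) = alpha^k * cm k"
    if "i \<in> {1..N}" "k \<le> 4" for i k using CN_moment[OF apos _ that(2)] dUR that(1) by auto
  have mRB: "integrable M (\<lambda>\<omega>. cmod (hRB i \<omega>) ^ k) \<and> expectation (\<lambda>\<omega>. cmod (hRB i \<omega>) ^ k) = beta^k * cm k"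
    if "i \<in> {1..N}" "k \<le> 4" for i k using CN_moment[OF bpos _ that(2)] dRB that(1) by auto
  have iv_uv: "indep_var borel (\<lambda>\<omega>. cmod (hUR i \<omega>) ^ k) borel (\<lambda>\<omega>. cmod (hRB i \<omega>) ^ l)"
    if "i \<in> {1..N}" for i k l
  proof -
    have "indep_var (PiM {UR i} (\<lambda>_. borel)) (\<lambda>\<omega>. restrict (\<lambda>j. X j \<omega>) {UR i})
        (PiM {RB i} (\<lambda>_. borel)) (\<lambda>\<omega>. restrict (\<lambda>j. X j \<omega>) {RB i})"
      by (rule indep_var_restrict[OF indX]) (use that in \<open>auto simp: I_def\<close>)
    then have "indep_var borel ((\<lambda>f. cmod (f (UR i)) ^ k) \<circ> (\<lambda>\<omega>. restrict (\<lambda>j. X j \<omega>) {UR i}))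
        borel ((\<lambda>f. cmod (f (RB i)) ^ l) \<circ> (\<lambda>\<omega>. restrict (\<lambda>j. X j \<omega>) {RB i}))"
      by (rule indep_var_compose) (auto intro!: borel_measurable_power mc)
    then show ?thesis by (simp add: comp_def X_def)
  qed
  have mP: "integrable M (\<lambda>\<omega>. W i \<omega> ^ k) \<and> expectation (\<lambda>\<omega>. W i \<omega> ^ k) = (\<lambda>k. (alpha*beta)^k * cm k ^ 2) k"
    if "i \<in> P" "k \<le> 4" for i k
  proof -
    have i: "i \<in> {1..N}" "i \<noteq> 0" "A i = 0" using that by (auto simp: P_def)
    have eq: "(\<lambda>\<omega>. W i \<omega> ^ k) = (\<lambda>\<omega>. cmod (hUR i \<omega>) ^ k * cmod (hRB i \<omega>) ^ k)"
      using i by (simp add: W_def power_mult_distrib fun_eq_iff)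
    have u: "integrable M (\<lambda>\<omega>. cmod (hUR i \<omega>) ^ k)" "expectation (\<lambda>\<omega>. cmod (hUR i \<omega>) ^ k) = alpha^k * cm k"
      using mUR[OF i(1) that(2)] by auto
    have v: "integrable M (\<lambda>\<omega>. cmod (hRB i \<omega>) ^ k)" "expectation (\<lambda>\<omega>. cmod (hRB i \<omega>) ^ k) = beta^k * cm k"
      using mRB[OF i(1) that(2)] by auto
    show ?thesis
      unfolding eq
      using indep_var_lebesgue_integral[OF iv_uv[OF i(1)] u(1) v(1)] indep_var_integrable[OF iv_uv[OF i(1)] u(1) v(1)] u(2) v(2)
      by (simp add: power_mult_distrib power2_eq_square)
  qed
  have mQ: "integrable M (\<lambda>\<omega>. W i \<omega> ^ k) \<and> expectation (\<lambda>\<omega>. W i \<omega> ^ k) = (\<lambda>k. alpha^(2*k) * cm (2*k)) k"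
    if "i \<in> Q" "k \<le> 2" for i k
  proof -
    have i: "i \<in> {1..N}" "i \<noteq> 0" "A i \<noteq> 0" using that by (auto simp: Q_def)
    have eq: "(\<lambda>\<omega>. W i \<omega> ^ k) = (\<lambda>\<omega>. cmod (hUR i \<omega>) ^ (2*k))"
      using i by (simp add: W_def power_mult fun_eq_iff)
    show ?thesis unfolding eq using mUR[OF i(1), of "2*k"] that(2) by simp
  qed
  have m0: "integrable M (\<lambda>\<omega>. W 0 \<omega> ^ k) \<and> expectation (\<lambda>\<omega>. W 0 \<omega> ^ k) = gamma^k * cm k"
    if "k \<le> 4" for k
    using mUB[OF that] by (simp add: W_def)
  have indP: "indep_vars (\<lambda>_. borel) W P" by (rule indep_vars_subset[OF indW]) (auto simp: P_def)
  have indQ: "indep_vars (\<lambda>_. borel) W Q" by (rule indep_vars_subset[OF indW]) (auto simp: Q_def)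
  have mS: "integrable M (\<lambda>\<omega>. (\<Sum>i\<in>P. W i \<omega>)^k) \<and> expectation (\<lambda>\<omega>. (\<Sum>i\<in>P. W i \<omega>)^k)
      = sm (\<lambda>k. (alpha*beta)^k * cm k ^ 2) (card P) k" if "k \<le> 4" for k
    by (rule sum_mom[OF finP indP mP that])
  have mZ: "integrable M (\<lambda>\<omega>. (\<Sum>i\<in>Q. W i \<omega>)^k) \<and> expectation (\<lambda>\<omega>. (\<Sum>i\<in>Q. W i \<omega>)^k)
      = sm (\<lambda>k. alpha^(2*k) * cm (2*k)) (card Q) k" if "k \<le> 2" for k
    by (rule sum_mom[OF finQ indQ mQ that])
  have ivRS: "indep_var borel (W 0) borel (\<lambda>\<omega>. \<Sum>i\<in>P. W i \<omega>)"
    by (rule indep_vars_sum[OF finP P0]) (rule indep_vars_subset[OF indW], auto simp: P_def)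
  have mRS: "integrable M (\<lambda>\<omega>. (W 0 \<omega> + (\<Sum>i\<in>P. W i \<omega>))^k) \<and>
      expectation (\<lambda>\<omega>. (W 0 \<omega> + (\<Sum>i\<in>P. W i \<omega>))^k) =
      (\<Sum>j\<le>k. real (k choose j) * (gamma^j * cm j) * sm (\<lambda>k. (alpha*beta)^k * cm k ^ 2) (card P) (k - j))"
    if "k \<le> 4" for k
    by (rule binom_mom[OF ivRS m0 mS that])
  have ivRSZ: "indep_var borel (\<lambda>\<omega>. (W 0 \<omega> + (\<Sum>i\<in>P. W i \<omega>))^2) borel (\<lambda>\<omega>. \<Sum>i\<in>Q. W i \<omega>)"
  proof -
    have "indep_var (PiM (insert 0 P) (\<lambda>_. borel)) (\<lambda>\<omega>. restrict (\<lambda>i. W i \<omega>) (insert 0 P))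
        (PiM Q (\<lambda>_. borel)) (\<lambda>\<omega>. restrict (\<lambda>i. W i \<omega>) Q)"
      by (rule indep_var_restrict[OF indW]) (auto simp: P_def Q_def)
    then have "indep_var borel ((\<lambda>f. (f 0 + (\<Sum>i\<in>P. f i))^2) \<circ> (\<lambda>\<omega>. restrict (\<lambda>i. W i \<omega>) (insert 0 P)))
        borel ((\<lambda>f. \<Sum>i\<in>Q. f i) \<circ> (\<lambda>\<omega>. restrict (\<lambda>i. W i \<omega>) Q))"
    proof (rule indep_var_compose)
      have c: "(\<lambda>f. f i) \<in> borel_measurable (PiM (insert 0 P) (\<lambda>_. borel :: real measure))" if "i \<in> insert 0 P" for i
        using measurable_component_singleton[OF that, of "\<lambda>_. borel"] by simp
      show "(\<lambda>f::nat\<Rightarrow>real. (f 0 + (\<Sum>i\<in>P. f i))^2) \<in> borel_measurable (PiM (insert 0 P) (\<lambda>_. borel))"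
        by (rule meas_RS)
      show "(\<lambda>f::nat\<Rightarrow>real. \<Sum>i\<in>Q. f i) \<in> borel_measurable (PiM Q (\<lambda>_. borel))"
        by (rule meas_Z)
    qed
    moreover have "((\<lambda>f. (f 0 + (\<Sum>i\<in>P. f i))^2) \<circ> (\<lambda>\<omega>. restrict (\<lambda>i. W i \<omega>) (insert 0 P)))
        = (\<lambda>\<omega>. (W 0 \<omega> + (\<Sum>i\<in>P. W i \<omega>))^2)"
    proof
      fix \<omega>
      have "(\<Sum>i\<in>P. restrict (\<lambda>i. W i \<omega>) (insert 0 P) i) = (\<Sum>i\<in>P. W i \<omega>)"
        by (rule sum.cong) auto
      then show "((\<lambda>f. (f 0 + (\<Sum>i\<in>P. f i))^2) \<circ> (\<lambda>\<omega>. restrict (\<lambda>i. W i \<omega>) (insert 0 P))) \<omega>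
        = (W 0 \<omega> + (\<Sum>i\<in>P. W i \<omega>))^2" by simp
    qed
    moreover have "((\<lambda>f. \<Sum>i\<in>Q. f i) \<circ> (\<lambda>\<omega>. restrict (\<lambda>i. W i \<omega>) Q)) = (\<lambda>\<omega>. \<Sum>i\<in>Q. W i \<omega>)"
    proof
      fix \<omega>
      show "((\<lambda>f. \<Sum>i\<in>Q. f i) \<circ> (\<lambda>\<omega>. restrict (\<lambda>i. W i \<omega>) Q)) \<omega> = (\<Sum>i\<in>Q. W i \<omega>)"
        unfolding comp_def by (rule sum.cong) auto
    qed
    ultimately show ?thesis by simp
  qed
  have gs_eq: "rdars_snr N A gbar (hUB \<omega>) (\<lambda>i. hUR i \<omega>) (\<lambda>i. hRB i \<omega>)
      = gbar * ((W 0 \<omega> + (\<Sum>i\<in>P. W i \<omega>))^2 + (\<Sum>i\<in>Q. W i \<omega>))" for \<omega>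
  proof -
    have s1: "(\<Sum>i=1..N. (1 - A i) * cmod (hRB i \<omega>) * cmod (hUR i \<omega>)) = (\<Sum>i\<in>P. W i \<omega>)"
    proof -
      have "(\<Sum>i\<in>P. W i \<omega>) = (\<Sum>i\<in>{1..N}. if A i = 0 then W i \<omega> else 0)"
        unfolding P_def by (rule sum.inter_filter) simp
      also have "\<dots> = (\<Sum>i=1..N. (1 - A i) * cmod (hRB i \<omega>) * cmod (hUR i \<omega>))"
      proof (rule sum.cong)
        fix i assume i: "i \<in> {1..N}"
        then have "A i = 0 \<or> A i = 1" using A01 by auto
        then show "(if A i = 0 then W i \<omega> else 0) = (1 - A i) * cmod (hRB i \<omega>) * cmod (hUR i \<omega>)"
          using i by (auto simp: W_def)
      qed simp
      finally show ?thesis ..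
    qed
    have s2: "(\<Sum>i=1..N. A i * (cmod (hUR i \<omega>))^2) = (\<Sum>i\<in>Q. W i \<omega>)"
    proof -
      have "(\<Sum>i\<in>Q. W i \<omega>) = (\<Sum>i\<in>{1..N}. if A i = 1 then W i \<omega> else 0)"
        unfolding Q_def by (rule sum.inter_filter) simp
      also have "\<dots> = (\<Sum>i=1..N. A i * (cmod (hUR i \<omega>))^2)"
      proof (rule sum.cong)
        fix i assume i: "i \<in> {1..N}"
        then have "A i = 0 \<or> A i = 1" using A01 by auto
        then show "(if A i = 1 then W i \<omega> else 0) = A i * (cmod (hUR i \<omega>))^2"
          using i by (auto simp: W_def)
      qed simp
      finally show ?thesis ..
    qed
    show ?thesis unfolding rdars_snr_def s1 s2 by (simp add: W_def)
  qed
  define RS where "RS = (\<lambda>\<omega>. W 0 \<omega> + (\<Sum>i\<in>P. W i \<omega>))"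
  define Z where "Z = (\<lambda>\<omega>. \<Sum>i\<in>Q. W i \<omega>)"
  define mu where "mu = (\<lambda>k. (alpha*beta)^k * cm k ^ 2)"
  define nu where "nu = (\<lambda>k. alpha^(2*k) * cm (2*k))"
  define E2 where "E2 = (\<Sum>j\<le>2. real (2 choose j) * (gamma^j * cm j) * sm mu (card P) (2 - j))"
  define E4 where "E4 = (\<Sum>j\<le>4. real (4 choose j) * (gamma^j * cm j) * sm mu (card P) (4 - j))"
  have gsf: "(\<lambda>\<omega>. rdars_snr N A gbar (hUB \<omega>) (\<lambda>i. hUR i \<omega>) (\<lambda>i. hRB i \<omega>)) = (\<lambda>\<omega>. gbar * ((RS \<omega>)^2 + Z \<omega>))"
    using gs_eq by (simp add: RS_def Z_def fun_eq_iff)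
  have iRS2: "integrable M (\<lambda>\<omega>. (RS \<omega>)^2)" and eRS2: "expectation (\<lambda>\<omega>. (RS \<omega>)^2) = E2"
    using mRS[of 2] by (simp_all add: RS_def E2_def mu_def)
  have iRS4: "integrable M (\<lambda>\<omega>. (RS \<omega>)^4)" and eRS4: "expectation (\<lambda>\<omega>. (RS \<omega>)^4) = E4"
    using mRS[of 4] by (simp_all add: RS_def E4_def mu_def)
  have iZ1: "integrable M Z" and eZ1: "expectation Z = sm nu (card Q) 1"
    using mZ[of 1] by (simp_all add: Z_def nu_def)
  have iZ2: "integrable M (\<lambda>\<omega>. (Z \<omega>)^2)" and eZ2: "expectation (\<lambda>\<omega>. (Z \<omega>)^2) = sm nu (card Q) 2"
    using mZ[of 2] by (simp_all add: Z_def nu_def)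
  have ivRSZ': "indep_var borel (\<lambda>\<omega>. (RS \<omega>)^2) borel Z"
    using ivRSZ by (simp add: RS_def Z_def)
  have iRSZ: "integrable M (\<lambda>\<omega>. (RS \<omega>)^2 * Z \<omega>)"
    using indep_var_integrable[OF ivRSZ' iRS2 iZ1] .
  have eRSZ: "expectation (\<lambda>\<omega>. (RS \<omega>)^2 * Z \<omega>) = E2 * sm nu (card Q) 1"
    using indep_var_lebesgue_integral[OF ivRSZ' iRS2 iZ1] eRS2 eZ1 by simp
  have E1': "expectation (\<lambda>\<omega>. rdars_snr N A gbar (hUB \<omega>) (\<lambda>i. hUR i \<omega>) (\<lambda>i. hRB i \<omega>))
      = gbar * (E2 + sm nu (card Q) 1)"
    unfolding gsf using iRS2 iZ1 eRS2 eZ1 by (simp add: Bochner_Integration.integral_add)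
  have sqf: "(\<lambda>\<omega>. (rdars_snr N A gbar (hUB \<omega>) (\<lambda>i. hUR i \<omega>) (\<lambda>i. hRB i \<omega>))^2)
      = (\<lambda>\<omega>. gbar^2 * ((RS \<omega>)^4 + 2 * ((RS \<omega>)^2 * Z \<omega>) + (Z \<omega>)^2))"
    by (rule ext) (simp only: gs_eq RS_def Z_def, simp add: algebra_simps eval_nat_numeral)
  have E2': "expectation (\<lambda>\<omega>. (rdars_snr N A gbar (hUB \<omega>) (\<lambda>i. hUR i \<omega>) (\<lambda>i. hRB i \<omega>))^2)
      = gbar^2 * (E4 + 2 * E2 * sm nu (card Q) 1 + sm nu (card Q) 2)"
    unfolding sqf using iRS4 iRSZ iZ2 eRS4 eRSZ eZ2
    by (simp add: Bochner_Integration.integral_add)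
  have Wnn: "W j \<omega> \<ge> 0" for j \<omega> by (simp add: W_def)
  have pos: "expectation (\<lambda>\<omega>. rdars_snr N A gbar (hUB \<omega>) (\<lambda>i. hUR i \<omega>) (\<lambda>i. hRB i \<omega>)) > 0"
  proof -
    have i0: "integrable M (\<lambda>\<omega>. (W 0 \<omega>)^2)" and e0: "expectation (\<lambda>\<omega>. (W 0 \<omega>)^2) = gamma^2"
      using m0[of 2] by (simp_all add: cm_def)
    have "expectation (\<lambda>\<omega>. (W 0 \<omega>)^2) \<le> expectation (\<lambda>\<omega>. (RS \<omega>)^2)"
    proof (rule integral_mono[OF i0 iRS2])
      fix \<omega> show "(W 0 \<omega>)^2 \<le> (RS \<omega>)^2"
        unfolding RS_def by (rule power_mono) (auto intro!: sum_nonneg Wnn)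
    qed
    moreover have "0 \<le> expectation Z"
      by (rule Bochner_Integration.integral_nonneg) (auto simp: Z_def intro!: sum_nonneg Wnn)
    ultimately have "gamma^2 \<le> E2 + sm nu (card Q) 1" using e0 eRS2 eZ1 by simp
    then have "0 < E2 + sm nu (card Q) 1" using gpos by (smt (verit) zero_less_power)
    then show ?thesis unfolding E1' using gbpos by simp
  qed
  have Ea: "(\<Sum>i=1..N. A i) = real (card Q)"
  proof -
    have "(\<Sum>i=1..N. A i) = (\<Sum>i\<in>{1..N}. if A i = 1 then 1 else 0)"
      by (rule sum.cong) (use A01 in auto)
    also have "\<dots> = (\<Sum>i\<in>Q. 1)" unfolding Q_def by (rule sum.inter_filter[symmetric]) simp
    finally show ?thesis by simp
  qed
  have En: "real N = real (card Q) + real (card P)"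
  proof -
    have "card {1..N} = card P + card Q"
      unfolding PQ(2)[symmetric] by (rule card_Un_disjoint[OF finP finQ PQ(1)])
    then show ?thesis by simp
  qed
  have bb: "real (card Q) + real (card P) - real (card Q) = real (card P)" by simp
  have A1: "gbar * (E2 + sm nu (card Q) 1) =
      gbar * ((real (card Q) + real (card P))^2 * pi^2/16 * alpha^2 * beta^2
               + alpha^2 * beta^2 * ((real (card Q) + real (card P)) * (1 - pi^2/8 * real (card Q) - pi^2/16) + pi^2/16 * real (card Q) * (real (card Q)+1) - real (card Q))
               + alpha * beta * gamma * (pi * sqrt pi / 4) * real (card P) + real (card Q) * alpha^2 + gamma^2)"
    unfolding E2_def mu_def nu_def by (rule alg1)
    have m1pos: "0 < gbar * ((real (card Q) + real (card P))^2 * pi^2/16 * alpha^2 * beta^2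
               + alpha^2 * beta^2 * ((real (card Q) + real (card P)) * (1 - pi^2/8 * real (card Q) - pi^2/16) + pi^2/16 * real (card Q) * (real (card Q)+1) - real (card Q))
               + alpha * beta * gamma * (pi * sqrt pi / 4) * real (card P) + real (card Q) * alpha^2 + gamma^2)"
      using pos unfolding E1' A1 .
    have A2: "gbar^2 * (E4 + 2 * E2 * sm nu (card Q) 1 + sm nu (card Q) 2) = gbar^2 * (2 * gamma^4 + 6 * real (card P) * (1 + pi^2/16 * (real (card P)-1)) * gamma^2 * alpha^2 * beta^2
               + 3 * pi * sqrt pi / 4 * real (card P) * gamma^3 * alpha * beta
               + (4*real (card P) + 9*pi^2/16 * real (card P)*(real (card P)-1) + 3*real (card P)*(real (card P)-1) + 6*pi^2/16 * real (card P)*(real (card P)-1)*(real (card P)-2)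
              + pi^4/256 * real (card P)*(real (card P)-1)*(real (card P)-2)*(real (card P)-3)) * alpha^4 * beta^4
               + 2 * sqrt pi * (9*pi/16 * real (card P) + 3*pi/4 * real (card P)*(real (card P)-1) + pi^3/64 * real (card P)*(real (card P)-1)*(real (card P)-2)) * alpha^3 * beta^3 * gamma
               + 2 * real (card Q) * gamma^2 * alpha^2 + 2 * real (card P) * (1 + pi^2/16 * (real (card P)-1)) * real (card Q) * alpha^4 * beta^2
               + pi * sqrt pi / 2 * real (card P) * real (card Q) * alpha^3 * gamma * beta + real (card Q) * (real (card Q)+1) * alpha^4)"
      unfolding E4_def E2_def mu_def nu_def by (rule alg2)
  show ?thesis
    unfolding Let_def Ea En bb
    apply (intro conjI)
    subgoal by (simp only: E1' A1)
    subgoal by (simp only: E2' A2)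
    by (rule gamma_final[OF m1pos])
qed

end
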